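(* Let $\mathcal Q_0=\mathbb{R}^{N}$ with coordinates $(\mu_0^1,\dots,\mu_0^{k_-},x_0^1,\dots,x_0^{N-k_-})$ and $\mathcal Q_1=\mathbb{R}^{N}$ with coordinates $x_1$. At step $0$ let the quantum pre-constraints be $^-\hat C^0_I=\hat p_{\mu,I}-\partial S_0/\partial\mu_0^I$ ($I=1,\dots,k_-$) for a smooth real function $S_0(\mu_0,x_0)$, with $\hat p_{\mu,I}=-i\hbar\partial_{\mu_0^I}$, and let $^-G^0_K(\mu_0,x_0)=0$ ($K=1,\dots,k_-$) be global gauge conditions on configuration variables only (unique solution $\mu_0^K=c^K(x_0)$ with nonvanishing $\det(\partial\,{}^-G^0_K/\partial\mu_0^I)$). Set $^-\mathbb P_0:=\prod_{I}\delta(^-\hat C^0_I)$ acting on the $\mathcal Q_0$ variables, and let $^+\mathbb P_1$ be a linear operator acting only on the $\mathcal Q_1$ variables. Given a kinematical propagator $\kappa_{0\to1}(x_0,x_1)$ (a function on $\mathcal Q_0\times\mathcal Q_1$), define the physical propagator $K_{0\to1}:={}^+\mathbb P_1\,({}^-\mathbb P_0)^*\kappa_{0\to1}$ and the pre-fixed propagator $K^{f_+}_{0\to1}:={}^+\mathbb P_1\kappa_{0\to1}$. For a pre-physical state $^-\psi^{\rm phys}_0={}^-\mathbb P_0\psi_0^{\rm kin}$ define $U_{0\to1}\,{}^-\psi^{\rm phys}_0(x_1):=\int_{\mathcal Q_0}dx_0\,K^{f_+}_{0\to1}(x_0,x_1)\,{}^-\psi^{\rm phys}_0(x_0)=:{}^+\psi^{\rm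 phys}_1(x_1)$. Then $$^+\psi^{\rm phys}_1(x_1)=\int_{\mathcal Q_0}d\xi^-_0(\mu_0,x_0)\,K_{0\to1}(\mu_0,x_0;x_1)\,{}^-\psi^{\rm phys}_0(\mu_0,x_0)=(2\pi\hbar)^{k_-}\int\prod_\alpha dx_0^\alpha\,K_{0\to1}(\mu_0,x_0;x_1)\,{}^-\psi^{\rm phys}_0(\mu_0,x_0),$$ with Faddeev–Popov regularized pre-measure $$d\xi^-_0(\mu_0,x_0):=(2\pi)^{k_-}\prod_{I,\alpha}d\mu_0^Idx_0^\alpha\,\Big|\det\big([^-\hat G^0_K,{}^-\hat C^0_I]\big)\Big|\prod_{K=1}^{k_-}\delta\big(^-G^0_K(\mu_0,x_0)\big).$$ The map $U_{0\to1}$ so expressed is independent of the value of $\mu_0$ and of the particular choice of gauge conditions $^-G^0_K$.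
   Context: $\delta(\hat C):=\frac{1}{2\pi\hbar}\int_{\mathbb{R}}ds\,e^{is\hat C/\hbar}$ (improper group-averaging projector). For an operator $\hat A$, $(\hat A)^*$ denotes its complex conjugate (not the adjoint), i.e. $(\hat A)^*f:=(\hat A f^* )^*$; thus $({}^-\mathbb P_0)^*\kappa_{0\to1}$ is the complex conjugate of $^-\mathbb P_0$ applied to $\kappa_{0\to1}^*$ in the $x_0$ variables, so that $K_{0\to1}^*$ is annihilated by the pre-constraints. $[^-\hat G^0_K,{}^-\hat C^0_I]=i\hbar\,\partial\,{}^-G^0_K/\partial\mu_0^I$. The constraints $^-\hat C^0_I$ are self-adjoint with respect to the kinematical $L^2$ inner product on $\mathcal Q_0$. All functions are assumed such that the integrals are defined. *)

theory Defs
  imports "HOL-Analysis.Analysis"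
begin

text \<open>Smoothness (C-infinity) of a map between real normed spaces: it lies in a family of
  everywhere-differentiable maps that is closed under taking directional derivatives.\<close>
definition smooth_map :: "('a::real_normed_vector \<Rightarrow> 'b::real_normed_vector) \<Rightarrow> bool" where
  "smooth_map f \<longleftrightarrow> (\<exists>F. f \<in> F \<and>
     (\<forall>g\<in>F. (\<forall>p. g differentiable (at p)) \<and>
              (\<forall>v. (\<lambda>p. frechet_derivative g (at p) v) \<in> F)))"

text \<open>Configuration space Q0 = R^k x R^m with coordinates (mu_0, x_0).\<close>

definition shift_mu :: "real^'k \<Rightarrow> ((real^'k) \<times> (real^'m)) \<Rightarrow> ((real^'k) \<times> (real^'m))" where
  "shift_mu s p = (fst p + s, snd p)"

text \<open>The unitary group exp(i s^I C_I / hbar) generated by the commuting pre-constraints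
  C_I = p_{mu,I} - dS/dmu^I (p = -i hbar d/dmu), i.e. e^{iS/hbar} (translation by s in mu) e^{-iS/hbar}.\<close>
definition pre_flow :: "real \<Rightarrow> ((real^'k) \<times> (real^'m) \<Rightarrow> real) \<Rightarrow> real^'k
     \<Rightarrow> ((real^'k) \<times> (real^'m) \<Rightarrow> complex) \<Rightarrow> ((real^'k) \<times> (real^'m) \<Rightarrow> complex)" where
  "pre_flow hbar S s f = (\<lambda>p. cis ((S p - S (shift_mu s p)) / hbar) * f (shift_mu s p))"

text \<open>Pre-projector P_0 = prod_I delta(C_I) = (2 pi hbar)^{-k} int d^k s exp(i s^I C_I/hbar).\<close>
definition pre_proj :: "real \<Rightarrow> ((real^'k) \<times> (real^'m) \<Rightarrow> real)
     \<Rightarrow> ((real^'k) \<times> (real^'m) \<Rightarrow> complex) \<Rightarrow> ((real^'k) \<times> (real^'m) \<Rightarrow> complex)" where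
  "pre_proj hbar S f = (\<lambda>p. complex_of_real ((1 / (2 * pi * hbar)) ^ CARD('k)) *
      (\<integral>s. pre_flow hbar S s f p \<partial>lborel))"

text \<open>Complex conjugate (not adjoint) of an operator: A^* f = (A f^*)^*.\<close>
definition cconj_op :: "(('a \<Rightarrow> complex) \<Rightarrow> ('a \<Rightarrow> complex)) \<Rightarrow> ('a \<Rightarrow> complex) \<Rightarrow> ('a \<Rightarrow> complex)" where
  "cconj_op A f = (\<lambda>p. cnj (A (\<lambda>q. cnj (f q)) p))"

definition phys_prop :: "real \<Rightarrow> ((real^'k) \<times> (real^'m) \<Rightarrow> real)
     \<Rightarrow> (('c \<Rightarrow> complex) \<Rightarrow> ('c \<Rightarrow> complex))
     \<Rightarrow> ((real^'k) \<times> (real^'m) \<Rightarrow> 'c \<Rightarrow> complex) \<Rightarrow> ((real^'k) \<times> (real^'m)) \<Rightarrow> 'c \<Rightarrow> complex" where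
  "phys_prop hbar S P1 kappa = (\<lambda>p x1. P1 (\<lambda>y. cconj_op (pre_proj hbar S) (\<lambda>q. kappa q y) p) x1)"

definition prefixed_prop :: "(('c \<Rightarrow> complex) \<Rightarrow> ('c \<Rightarrow> complex))
     \<Rightarrow> ('q \<Rightarrow> 'c \<Rightarrow> complex) \<Rightarrow> 'q \<Rightarrow> 'c \<Rightarrow> complex" where
  "prefixed_prop P1 kappa = (\<lambda>p x1. P1 (kappa p) x1)"

definition evolve :: "(('c \<Rightarrow> complex) \<Rightarrow> ('c \<Rightarrow> complex))
     \<Rightarrow> ((real^'k) \<times> (real^'m) \<Rightarrow> 'c \<Rightarrow> complex) \<Rightarrow> ((real^'k) \<times> (real^'m) \<Rightarrow> complex) \<Rightarrow> 'c \<Rightarrow> complex" where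
  "evolve P1 kappa psi = (\<lambda>x1. \<integral>p. prefixed_prop P1 kappa p x1 * psi p \<partial>lborel)"

definition mu_jac :: "((real^'k) \<times> (real^'m) \<Rightarrow> real^'k) \<Rightarrow> (real^'k) \<times> (real^'m) \<Rightarrow> real^'k^'k" where
  "mu_jac G p = (\<chi> K I. frechet_derivative G (at p) (axis I 1, 0) $ K)"

text \<open>Matrix of commutators [G_K, C_I] = i hbar dG_K/dmu^I.\<close>
definition gauge_comm :: "real \<Rightarrow> ((real^'k) \<times> (real^'m) \<Rightarrow> real^'k) \<Rightarrow> (real^'k) \<times> (real^'m) \<Rightarrow> complex^'k^'k" where
  "gauge_comm hbar G p = (\<chi> K I. \<i> * complex_of_real hbar * complex_of_real (mu_jac G p $ K $ I))"

text \<open>int d^k mu f(mu) prod_K delta(G_K(mu,x)): pullback of the delta distribution along the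
  map mu |-> G(mu,x) (standard formula sum over zeros of f / |det dG/dmu|).\<close>
definition delta_int :: "((real^'k) \<times> (real^'m) \<Rightarrow> real^'k) \<Rightarrow> real^'m \<Rightarrow> (real^'k \<Rightarrow> complex) \<Rightarrow> complex" where
  "delta_int G x f = (\<Sum>\<mu>\<in>{\<mu>. G (\<mu>, x) = 0}. f \<mu> / complex_of_real \<bar>det (mu_jac G (\<mu>, x))\<bar>)"

definition xi_int :: "real \<Rightarrow> ((real^'k) \<times> (real^'m) \<Rightarrow> real^'k) \<Rightarrow> ((real^'k) \<times> (real^'m) \<Rightarrow> complex) \<Rightarrow> complex" where
  "xi_int hbar G F = complex_of_real ((2 * pi) ^ CARD('k)) *
     (\<integral>x. delta_int G x (\<lambda>\<mu>. complex_of_real (cmod (det (gauge_comm hbar G (\<mu>, x)))) * F (\<mu>, x)) \<partial>lborel)"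

end

theory Submission
  imports Defs
begin


lemma integral_translate:
  fixes f :: "'a::euclidean_space \<Rightarrow> 'b::{banach,second_countable_topology}"
  shows "(\<integral>s. f (c + s) \<partial>lborel) = (\<integral>s. f s \<partial>lborel)"
proof (cases "integrable lborel f")
  case True
  hence [measurable]: "f \<in> borel_measurable borel" by (simp add: borel_measurable_integrable)
  have "(\<integral>s. f s \<partial>lborel) = (\<integral>s. f s \<partial>distr lborel borel ((+) c))"
    by (simp add: lborel_distr_plus)
  also have "\<dots> = (\<integral>s. f (c + s) \<partial>lborel)"
    by (rule integral_distr) auto
  finally show ?thesis ..
next
  case False
  have "\<not> integrable lborel (\<lambda>s. f (c + s))"
  proof
    assume i: "integrable lborel (\<lambda>s. f (c + s))"
    hence [measurable]: "(\<lambda>s. f (c + s)) \<in> borel_measurable borel" by (simp add: borel_measurable_integrable)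
    have "integrable (distr lborel borel ((+) (-c))) (\<lambda>s. f (c + s))"
      by (simp add: lborel_distr_plus i)
    hence "integrable lborel (\<lambda>s. f (c + (-c + s)))"
      by (subst (asm) integrable_distr_eq) auto
    with False show False by simp
  qed
  with False show ?thesis by (simp add: not_integrable_integral_eq)
qed



lemma pre_proj_form:
  fixes S :: "(real^'k) \<times> (real^'m) \<Rightarrow> real"
  shows "pre_proj hbar S f (\<mu>, x) =
    complex_of_real ((1 / (2 * pi * hbar)) ^ CARD('k)) * cis (S (\<mu>, x) / hbar) *
    (\<integral>\<nu>. cis (- S (\<nu>, x) / hbar) * f (\<nu>, x) \<partial>lborel)"
proof -
  have "\<And>s. pre_flow hbar S s f (\<mu>, x) = cis (S (\<mu>, x) / hbar) * (cis (- S (\<mu> + s, x) / hbar) * f (\<mu> + s, x))"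
  proof -
    fix s
    have "cis ((S (\<mu>, x) - S (\<mu> + s, x)) / hbar) = cis (S (\<mu>, x) / hbar) * cis (- S (\<mu> + s, x) / hbar)"
      by (simp add: cis_mult diff_divide_distrib)
    thus "pre_flow hbar S s f (\<mu>, x) = cis (S (\<mu>, x) / hbar) * (cis (- S (\<mu> + s, x) / hbar) * f (\<mu> + s, x))"
      by (simp add: pre_flow_def shift_mu_def)
  qed
  hence "(\<integral>s. pre_flow hbar S s f (\<mu>, x) \<partial>lborel) = cis (S (\<mu>, x) / hbar) * (\<integral>s. cis (- S (\<mu> + s, x) / hbar) * f (\<mu> + s, x) \<partial>lborel)"
    by simp
  also have "(\<integral>s. cis (- S (\<mu> + s, x) / hbar) * f (\<mu> + s, x) \<partial>lborel) = (\<integral>\<nu>. cis (- S (\<nu>, x) / hbar) * f (\<nu>, x) \<partial>lborel)"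
    by (rule integral_translate[of "\<lambda>\<nu>. cis (- S (\<nu>, x) / hbar) * f (\<nu>, x)"])
  finally show ?thesis by (simp add: pre_proj_def mult.assoc)
qed

lemma conj_proj_form:
  fixes S :: "(real^'k) \<times> (real^'m) \<Rightarrow> real"
  shows "cconj_op (pre_proj hbar S) f (\<mu>, x) =
    complex_of_real ((1 / (2 * pi * hbar)) ^ CARD('k)) * cis (- S (\<mu>, x) / hbar) *
    (\<integral>\<nu>. cis (S (\<nu>, x) / hbar) * f (\<nu>, x) \<partial>lborel)"
proof -
  have "cnj (\<integral>\<nu>. cis (- S (\<nu>, x) / hbar) * cnj (f (\<nu>, x)) \<partial>lborel)
      = (\<integral>\<nu>. cnj (cis (- S (\<nu>, x) / hbar) * cnj (f (\<nu>, x))) \<partial>lborel)"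
    by (rule Bochner_Integration.integral_cnj[symmetric])
  also have "\<dots> = (\<integral>\<nu>. cis (S (\<nu>, x) / hbar) * f (\<nu>, x) \<partial>lborel)"
    by (simp add: cis_cnj)
  finally show ?thesis by (simp add: cconj_op_def pre_proj_form cis_cnj)
qed

lemma det_gauge_comm:
  fixes G :: "(real^'k) \<times> (real^'m) \<Rightarrow> real^'k"
  assumes "hbar > 0"
  shows "cmod (det (gauge_comm hbar G p)) = hbar ^ CARD('k) * \<bar>det (mu_jac G p)\<bar>"
proof -
  let ?c = "\<i> * complex_of_real hbar"
  have "det (gauge_comm hbar G p) = ?c ^ CARD('k) * complex_of_real (det (mu_jac G p))"
    unfolding det_def gauge_comm_def
    by (simp add: prod.distrib of_real_sum of_real_prod sum_distrib_left mult_ac power_mult_distrib)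
  thus ?thesis using assms by (simp add: norm_mult norm_power)
qed




theorem lemma3:
  fixes hbar :: real
    and S :: "(real^'k) \<times> (real^'m) \<Rightarrow> real"
    and G :: "(real^'k) \<times> (real^'m) \<Rightarrow> real^'k"
    and P1 :: "(real^'n \<Rightarrow> complex) \<Rightarrow> (real^'n \<Rightarrow> complex)"
    and kappa :: "(real^'k) \<times> (real^'m) \<Rightarrow> real^'n \<Rightarrow> complex"
    and psi_kin :: "(real^'k) \<times> (real^'m) \<Rightarrow> complex"
    and x1 :: "real^'n"
    and mu0 :: "real^'k"
  assumes dims: "CARD('n) = CARD('k) + CARD('m)"
    and hbar: "hbar > 0"
    and S_smooth: "smooth_map S"
    and G_smooth: "smooth_map G"
    and G_unique: "\<forall>x. \<exists>!\<mu>. G (\<mu>, x) = 0"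
    and G_det: "\<forall>p. det (mu_jac G p) \<noteq> 0"
    and P1_linear: "\<forall>a b f g. P1 (\<lambda>y. a * f y + b * g y) = (\<lambda>y. a * P1 f y + b * P1 g y)"
    and P1_integral: "\<forall>(g :: real^'k \<Rightarrow> real^'n \<Rightarrow> complex) z.
        (\<forall>y. integrable lborel (\<lambda>\<nu>. g \<nu> y)) \<longrightarrow> integrable lborel (\<lambda>\<nu>. P1 (g \<nu>) z) \<longrightarrow>
        P1 (\<lambda>y. \<integral>\<nu>. g \<nu> y \<partial>lborel) z = (\<integral>\<nu>. P1 (g \<nu>) z \<partial>lborel)"
    and int_psi: "\<forall>p. integrable lborel (\<lambda>s. pre_flow hbar S s psi_kin p)"
    and int_kappa: "\<forall>p y. integrable lborel (\<lambda>s. pre_flow hbar S s (\<lambda>q. cnj (kappa q y)) p)"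
    and int_U: "integrable lborel (\<lambda>p. prefixed_prop P1 kappa p x1 * pre_proj hbar S psi_kin p)"
    and int_K: "\<forall>\<mu>. integrable lborel
        (\<lambda>x. phys_prop hbar S P1 kappa (\<mu>, x) x1 * pre_proj hbar S psi_kin (\<mu>, x))"
    and int_xi: "integrable lborel (\<lambda>x. delta_int G x (\<lambda>\<mu>.
        complex_of_real (cmod (det (gauge_comm hbar G (\<mu>, x)))) *
        (phys_prop hbar S P1 kappa (\<mu>, x) x1 * pre_proj hbar S psi_kin (\<mu>, x))))"
  shows "evolve P1 kappa (pre_proj hbar S psi_kin) x1
           = xi_int hbar G (\<lambda>p. phys_prop hbar S P1 kappa p x1 * pre_proj hbar S psi_kin p)
       \<and> xi_int hbar G (\<lambda>p. phys_prop hbar S P1 kappa p x1 * pre_proj hbar S psi_kin p)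
           = complex_of_real ((2 * pi * hbar) ^ CARD('k)) *
             (\<integral>x. phys_prop hbar S P1 kappa (mu0, x) x1 * pre_proj hbar S psi_kin (mu0, x) \<partial>lborel)"
  proof -
  define c0 where "c0 = complex_of_real ((1 / (2 * pi * hbar)) ^ CARD('k))"
  define Phi where "Phi x = (\<integral>\<nu>. cis (- S (\<nu>, x) / hbar) * psi_kin (\<nu>, x) \<partial>lborel)" for x
  define A where "A x = (\<lambda>y. \<integral>\<nu>. cis (S (\<nu>, x) / hbar) * kappa (\<nu>, x) y \<partial>lborel)" for x
  define F where "F p = phys_prop hbar S P1 kappa p x1 * pre_proj hbar S psi_kin p" for p
  have c0nz: "c0 \<noteq> 0" using hbar by (simp add: c0_def)
  have c0inv: "complex_of_real ((2 * pi * hbar) ^ CARD('k)) * c0 = 1"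
    using hbar by (simp add: c0_def power_one_over[symmetric] field_simps flip: of_real_mult)
  have lin: "\<And>a f. P1 (\<lambda>y. a * f y) = (\<lambda>y. a * P1 f y)"
  proof -
    fix a and f :: "real^'n \<Rightarrow> complex"
    show "P1 (\<lambda>y. a * f y) = (\<lambda>y. a * P1 f y)"
    proof -
      have "P1 (\<lambda>y. a * f y + 0 * f y) = (\<lambda>y. a * P1 f y + 0 * P1 f y)" using P1_linear by blast
      thus ?thesis by simp
    qed
  qed
  have Pform: "\<And>\<mu> x. pre_proj hbar S psi_kin (\<mu>, x) = c0 * cis (S (\<mu>, x) / hbar) * Phi x"
    by (simp add: pre_proj_form c0_def Phi_def)
  have Kform: "\<And>\<mu> x. phys_prop hbar S P1 kappa (\<mu>, x) x1 = c0 * cis (- S (\<mu>, x) / hbar) * P1 (A x) x1"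
  proof -
    fix \<mu> x
    have "(\<lambda>y. cconj_op (pre_proj hbar S) (\<lambda>q. kappa q y) (\<mu>, x)) = (\<lambda>y. (c0 * cis (- S (\<mu>, x) / hbar)) * A x y)"
      by (simp add: conj_proj_form c0_def A_def)
    thus "phys_prop hbar S P1 kappa (\<mu>, x) x1 = c0 * cis (- S (\<mu>, x) / hbar) * P1 (A x) x1"
      by (simp add: phys_prop_def lin)
  qed
  have Fform: "\<And>\<mu> x. F (\<mu>, x) = c0 * c0 * P1 (A x) x1 * Phi x"
  proof -
    fix \<mu> x
    have "cis (- S (\<mu>, x) / hbar) * cis (S (\<mu>, x) / hbar) = 1" by (simp add: cis_mult)
    moreover have "F (\<mu>, x) = (c0 * c0 * P1 (A x) x1 * Phi x) * (cis (- S (\<mu>, x) / hbar) * cis (S (\<mu>, x) / hbar))"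
      unfolding F_def Kform Pform by (simp only: mult_ac)
    ultimately show "F (\<mu>, x) = c0 * c0 * P1 (A x) x1 * Phi x" by simp
  qed
  have F_fun: "(\<lambda>p. phys_prop hbar S P1 kappa p x1 * pre_proj hbar S psi_kin p) = F"
    by (simp add: F_def fun_eq_iff)
  have eq2: "xi_int hbar G F = complex_of_real ((2 * pi * hbar) ^ CARD('k)) *
             (\<integral>x. F (mu0, x) \<partial>lborel)"
  proof -
    have pt: "delta_int G x (\<lambda>\<mu>. complex_of_real (cmod (det (gauge_comm hbar G (\<mu>, x)))) * F (\<mu>, x))
        = complex_of_real (hbar ^ CARD('k)) * F (mu0, x)" for x
    proof -
      have ex: "\<exists>!\<mu>. G (\<mu>, x) = 0" using G_unique by (rule spec)
      obtain m where m: "G (m, x) = 0" "\<And>\<mu>. G (\<mu>, x) = 0 \<Longrightarrow> \<mu> = m"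
        using ex by (elim ex1E) blast
      have set: "{\<mu>. G (\<mu>, x) = 0} = {m}" using m by blast
      have dz: "det (mu_jac G (m, x)) \<noteq> 0" using G_det by blast
      show ?thesis
        unfolding delta_int_def set using dz hbar
        by (simp add: det_gauge_comm Fform)
    qed
    show ?thesis unfolding xi_int_def pt
      by (simp add: power_mult_distrib)
  qed
  define h where "h \<mu> x = P1 (kappa (\<mu>, x)) x1 * pre_proj hbar S psi_kin (\<mu>, x)" for \<mu> x
  have hint: "integrable (lborel \<Otimes>\<^sub>M lborel) (case_prod h)"
    using int_U by (simp add: lborel_prod prefixed_prop_def h_def case_prod_beta')
  have ev: "evolve P1 kappa (pre_proj hbar S psi_kin) x1 = (\<integral>x. (\<integral>\<mu>. h \<mu> x \<partial>lborel) \<partial>lborel)"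
  proof -
    have "evolve P1 kappa (pre_proj hbar S psi_kin) x1 = integral\<^sup>L (lborel \<Otimes>\<^sub>M lborel) (case_prod h)"
      by (simp add: evolve_def lborel_prod prefixed_prop_def h_def case_prod_beta')
    thus ?thesis using lborel_pair.integral_snd[OF hint] by simp
  qed
  have ae: "AE x in lborel. (\<integral>\<mu>. h \<mu> x \<partial>lborel) = complex_of_real ((2 * pi * hbar) ^ CARD('k)) * F (mu0, x)"
    using lborel_pair.AE_integrable_snd[OF hint]
  proof (rule AE_mp, intro AE_I2 impI)
    fix x assume ix: "integrable lborel (\<lambda>\<mu>. h \<mu> x)"
    have hx: "h \<mu> x = (c0 * Phi x) * (cis (S (\<mu>, x) / hbar) * P1 (kappa (\<mu>, x)) x1)" for \<mu>
      by (simp add: h_def Pform mult_ac)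
    have rhs: "complex_of_real ((2 * pi * hbar) ^ CARD('k)) * F (mu0, x) = c0 * Phi x * P1 (A x) x1"
    proof -
      have "complex_of_real ((2 * pi * hbar) ^ CARD('k)) * F (mu0, x)
          = complex_of_real ((2 * pi * hbar) ^ CARD('k)) * (c0 * c0 * P1 (A x) x1 * Phi x)"
        by (simp only: Fform)
      also have "\<dots> = (complex_of_real ((2 * pi * hbar) ^ CARD('k)) * c0) * (c0 * Phi x * P1 (A x) x1)"
        by (simp only: mult_ac)
      also have "\<dots> = c0 * Phi x * P1 (A x) x1"
        by (simp only: c0inv mult_1_left)
      finally show ?thesis .
    qed
    show "(\<integral>\<mu>. h \<mu> x \<partial>lborel) = complex_of_real ((2 * pi * hbar) ^ CARD('k)) * F (mu0, x)"
    proof (cases "Phi x = 0")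
      case True
      thus ?thesis unfolding rhs hx by simp
    next
      case False
      have i2: "integrable lborel (\<lambda>\<nu>. cis (S (\<nu>, x) / hbar) * P1 (kappa (\<nu>, x)) x1)"
      proof -
        have "integrable lborel (\<lambda>\<mu>. inverse (c0 * Phi x) * h \<mu> x)" using ix by simp
        moreover have "inverse (c0 * Phi x) * h \<mu> x = cis (S (\<mu>, x) / hbar) * P1 (kappa (\<mu>, x)) x1" for \<mu>
        proof -
          have "inverse (c0 * Phi x) * h \<mu> x = (inverse (c0 * Phi x) * (c0 * Phi x)) * (cis (S (\<mu>, x) / hbar) * P1 (kappa (\<mu>, x)) x1)"
            unfolding hx by (simp only: mult.assoc)
          moreover have "inverse (c0 * Phi x) * (c0 * Phi x) = 1" using c0nz False by (simp add: field_simps)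
          ultimately show ?thesis by (simp only: mult_1_left)
        qed
        ultimately show ?thesis by simp
      qed
      have i1: "\<forall>y. integrable lborel (\<lambda>\<nu>. cis (S (\<nu>, x) / hbar) * kappa (\<nu>, x) y)"
      proof
        fix y
        have "integrable lborel (\<lambda>s. pre_flow hbar S s (\<lambda>q. cnj (kappa q y)) (0, x))"
          using int_kappa by simp
        hence "integrable lborel (\<lambda>s. cis (S (0, x) / hbar) * cnj (pre_flow hbar S s (\<lambda>q. cnj (kappa q y)) (0, x)))"
          by simp
        moreover have "cis (S (0, x) / hbar) * cnj (pre_flow hbar S s (\<lambda>q. cnj (kappa q y)) (0, x))
            = cis (S (s, x) / hbar) * kappa (s, x) y" for s
        proof -
          have "cis (S (0, x) / hbar) * cis (- ((S (0, x) - S (s, x)) / hbar)) = cis (S (s, x) / hbar)"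
            by (simp add: cis_mult diff_divide_distrib)
          thus ?thesis by (simp add: pre_flow_def shift_mu_def cis_cnj mult.assoc[symmetric])
        qed
        ultimately show "integrable lborel (\<lambda>\<nu>. cis (S (\<nu>, x) / hbar) * kappa (\<nu>, x) y)" by simp
      qed
      have i2': "integrable lborel (\<lambda>\<nu>. P1 (\<lambda>y. cis (S (\<nu>, x) / hbar) * kappa (\<nu>, x) y) x1)"
        using i2 by (simp add: lin)
      have "P1 (A x) x1 = (\<integral>\<nu>. P1 (\<lambda>y. cis (S (\<nu>, x) / hbar) * kappa (\<nu>, x) y) x1 \<partial>lborel)"
        unfolding A_def
        using P1_integral[rule_format, of "\<lambda>\<nu> y. cis (S (\<nu>, x) / hbar) * kappa (\<nu>, x) y" x1] i1 i2'
        by simp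
      also have "\<dots> = (\<integral>\<nu>. cis (S (\<nu>, x) / hbar) * P1 (kappa (\<nu>, x)) x1 \<partial>lborel)"
        by (simp add: lin)
      finally have PA: "P1 (A x) x1 = (\<integral>\<nu>. cis (S (\<nu>, x) / hbar) * P1 (kappa (\<nu>, x)) x1 \<partial>lborel)" .
      show ?thesis unfolding rhs hx PA by simp
    qed
  qed
  have m1: "(\<lambda>x. \<integral>\<mu>. h \<mu> x \<partial>lborel) \<in> borel_measurable lborel"
    using lborel_pair.integrable_snd[OF hint] by (rule borel_measurable_integrable)
  have m2: "(\<lambda>x. complex_of_real ((2 * pi * hbar) ^ CARD('k)) * F (mu0, x)) \<in> borel_measurable lborel"
    using int_K[rule_format, of mu0] unfolding F_def
    by (intro borel_measurable_integrable integrable_mult_right) simp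
  have eq1: "evolve P1 kappa (pre_proj hbar S psi_kin) x1 = complex_of_real ((2 * pi * hbar) ^ CARD('k)) *
             (\<integral>x. F (mu0, x) \<partial>lborel)"
    unfolding ev using integral_cong_AE[OF m1 m2 ae] by simp
  have Fm: "(\<integral>x. F (mu0, x) \<partial>lborel) = (\<integral>x. phys_prop hbar S P1 kappa (mu0, x) x1 * pre_proj hbar S psi_kin (mu0, x) \<partial>lborel)"
    by (simp add: F_def)
  show ?thesis unfolding F_fun using eq1 eq2 Fm by (simp only:)
qed


end
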